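(* Let $(X,\|\cdot\|_X)$ be a strictly convex two-dimensional real normed space such that the set of points of $S_X$ where $\|\cdot\|_X$ is not differentiable is finite. Let $C_X\subset X$ be a piecewise $C^1$ Jordan curve enclosing a convex set, and let $a\in C_X$ be a point at which $C_X$ is differentiable. Define $\operatorname{NDif}(a)=\{b\in C_X: t\mapsto\|\gamma_a(t)-b\|_X \text{ is not differentiable at } t=0\}$. Then $\operatorname{NDif}(a)$ is the union of a finite set and at most one segment, and if such a segment is present, one of its endpoints is $a$.
   Context: Fix the anticlockwise orientation of $X\cong\mathbb{R}^2$. For a point $a$ on a convex, piecewise $C^1$ Jordan curve $C\subset X$ of $\|\cdot\|_X$-length $L$, $\gamma_a:\mathbb{R}\to C$ denotes the unique anticlockwise, $L$-periodic map with $\gamma_a(0)=a$, injective on $[0,L)$, having one-sided derivatives at every $t$, all of $\|\cdot\|_X$-norm $1$. $C$ is differentiable at $\gamma_a(t)$ iff the one-sided derivatives of $\gamma_a$ at $t$ coincide. A norm is strictly convex if its unit sphere contains no nontrivial segment. *)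

theory Defs
  imports "HOL-Complex_Analysis.Complex_Analysis"
begin

text \<open>The two-dimensional real space X is identified with the complex plane (as a real
vector space, with its standard anticlockwise orientation); the norm of X is an
arbitrary norm N on it.\<close>

definition is_norm :: "(complex \<Rightarrow> real) \<Rightarrow> bool" where
  "is_norm N \<longleftrightarrow> (\<forall>x. N x = 0 \<longleftrightarrow> x = 0) \<and> (\<forall>x y. N (x + y) \<le> N x + N y)
     \<and> (\<forall>c x. N (c *\<^sub>R x) = \<bar>c\<bar> * N x)"

definition strictly_convex_norm :: "(complex \<Rightarrow> real) \<Rightarrow> bool" where
  "strictly_convex_norm N \<longleftrightarrow>
     (\<forall>x y. x \<noteq> y \<longrightarrow> \<not> closed_segment x y \<subseteq> {z. N z = 1})"

definition piecewise_C1_jordan_curve :: "complex set \<Rightarrow> bool" where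
  "piecewise_C1_jordan_curve C \<longleftrightarrow>
     (\<exists>g. simple_path g \<and> pathfinish g = pathstart g \<and>
          g piecewise_C1_differentiable_on {0..1} \<and> path_image g = C)"

text \<open>The arclength parametrisation gamma_a of C (w.r.t. N) starting at a:
anticlockwise, L-periodic, injective on [0,L), image C, one-sided derivatives
everywhere, all of N-norm 1. Anticlockwise means the closed loop traced on [0,L]
winds +1 around the points enclosed by C.\<close>
definition arclength_param ::
    "(complex \<Rightarrow> real) \<Rightarrow> complex set \<Rightarrow> real \<Rightarrow> complex \<Rightarrow> (real \<Rightarrow> complex) \<Rightarrow> bool" where
  "arclength_param N C L a \<gamma> \<longleftrightarrow>
     L > 0 \<and> \<gamma> 0 = a \<and> (\<forall>t. \<gamma> (t + L) = \<gamma> t) \<and> inj_on \<gamma> {0..<L} \<and> \<gamma> ` {0..<L} = C \<and>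
     (\<forall>t. \<exists>v w. (\<gamma> has_vector_derivative v) (at_right t) \<and>
                 (\<gamma> has_vector_derivative w) (at_left t) \<and> N v = 1 \<and> N w = 1) \<and>
     (\<forall>z\<in>inside C. winding_number (\<lambda>s. \<gamma> (L * s)) z = 1)"

text \<open>C is differentiable at gamma(t) iff the one-sided derivatives of gamma at t coincide.\<close>
definition curve_differentiable_at_param :: "(real \<Rightarrow> complex) \<Rightarrow> real \<Rightarrow> bool" where
  "curve_differentiable_at_param \<gamma> t \<longleftrightarrow>
     (\<exists>v. (\<gamma> has_vector_derivative v) (at_right t) \<and> (\<gamma> has_vector_derivative v) (at_left t))"

definition NDif :: "(complex \<Rightarrow> real) \<Rightarrow> complex set \<Rightarrow> (real \<Rightarrow> complex) \<Rightarrow> complex set" where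
  "NDif N C \<gamma> = {b \<in> C. \<not> (\<lambda>t. N (\<gamma> t - b)) differentiable (at 0)}"

end

theory Submission
  imports Defs
begin

lemma vd_split:
  fixes g :: "real \<Rightarrow> complex"
  assumes "(g has_vector_derivative v) (at_right t)" "(g has_vector_derivative v) (at_left t)"
  shows "(g has_vector_derivative v) (at t)"
proof -
  have nl: "netlimit (at_left t) = t" "netlimit (at_right t) = t"
    by (auto intro!: Lim_ident_at)
  have "((\<lambda>y. (g y - g t - (y - t) *\<^sub>R v) /\<^sub>R \<bar>y - t\<bar>) \<longlongrightarrow> 0) (sup (at_left t) (at_right t))"
    using assms unfolding has_vector_derivative_def has_derivative_def nl
    by (auto intro!: filterlim_sup)
  then show ?thesis using assms unfolding has_vector_derivative_def has_derivative_def
    by (simp add: at_eq_sup_left_right[of t, symmetric])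
qed

lemma norm_facts:
  assumes "is_norm N"
  shows "N 0 = 0" "\<And>x. N (-x) = N x" "\<And>x. N x \<ge> 0"
    "\<And>x. N x \<le> (N 1 + N \<i>) * cmod x"
    "\<And>x y. \<bar>N x - N y\<bar> \<le> (N 1 + N \<i>) * cmod (x - y)"
    "\<And>c x. N (c *\<^sub>R x) = \<bar>c\<bar> * N x"
    "\<And>x y. N (x + y) \<le> N x + N y"
proof -
  have Z: "\<And>x. N x = 0 \<longleftrightarrow> x = 0" and T: "\<And>x y. N (x + y) \<le> N x + N y"
    and H: "\<And>c x. N (c *\<^sub>R x) = \<bar>c\<bar> * N x" using assms unfolding is_norm_def by auto
  show "N 0 = 0" using Z by simp
  show NN: "N (-x) = N x" for x using H[of "-1" x] by simp
  show P: "N x \<ge> 0" for x using T[of x "-x"] NN[of x] Z[of 0] by simp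
  show B: "N x \<le> (N 1 + N \<i>) * cmod x" for x
  proof -
    have "x = Re x *\<^sub>R 1 + Im x *\<^sub>R \<i>" by (simp add: complex_eq_iff)
    then have "N x \<le> N (Re x *\<^sub>R 1) + N (Im x *\<^sub>R \<i>)" using T by metis
    also have "\<dots> = \<bar>Re x\<bar> * N 1 + \<bar>Im x\<bar> * N \<i>" using H by simp
    also have "\<dots> \<le> cmod x * N 1 + cmod x * N \<i>"
      using P[of 1] P[of \<i>] abs_Re_le_cmod[of x] abs_Im_le_cmod[of x]
      by (intro add_mono mult_right_mono) auto
    finally show ?thesis by (simp add: algebra_simps)
  qed
  show "\<bar>N x - N y\<bar> \<le> (N 1 + N \<i>) * cmod (x - y)" for x y
  proof -
    have "N x \<le> N y + N (x - y)" using T[of y "x - y"] by simp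
    moreover have "N y \<le> N x + N (y - x)" using T[of x "y - x"] by simp
    moreover have "N (y - x) = N (x - y)" using NN[of "x - y"] by simp
    ultimately show ?thesis using B[of "x - y"] by linarith
  qed
  show "N (c *\<^sub>R x) = \<bar>c\<bar> * N x" for c x by (rule H)
  show "N (x + y) \<le> N x + N y" for x y by (rule T)
qed


lemma seg_in_C:
  fixes I :: "complex set"
  assumes "open I" "convex I" "C = frontier I" "a \<in> C" "a - c1 *\<^sub>R u \<in> C" "a - c2 *\<^sub>R u \<in> C"
    "0 < c1" "c1 < c2" "u \<noteq> 0" "0 < s" "s < c1"
  shows "a - s *\<^sub>R u \<in> C"
proof -
  have fr: "frontier I = closure I - I" using assms(1) by (simp add: frontier_def interior_open)
  have "a - s *\<^sub>R u \<in> closed_segment a (a - c1 *\<^sub>R u)"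
    unfolding in_segment
  proof (intro exI conjI)
    show "a - s *\<^sub>R u = (1 - s / c1) *\<^sub>R a + (s / c1) *\<^sub>R (a - c1 *\<^sub>R u)"
      using assms(7) by (simp add: algebra_simps)
  qed (use assms in auto)
  moreover have "closed_segment a (a - c1 *\<^sub>R u) \<subseteq> closure I"
    using assms(2-5) fr by (intro closed_segment_subset convex_closure) auto
  ultimately have q1: "a - s *\<^sub>R u \<in> closure I" by blast
  have "a - s *\<^sub>R u \<notin> I"
  proof
    assume qI: "a - s *\<^sub>R u \<in> I"
    have "a - c1 *\<^sub>R u \<in> open_segment (a - s *\<^sub>R u) (a - c2 *\<^sub>R u)"
      unfolding in_segment
    proof (intro conjI exI)
      show "a - s *\<^sub>R u \<noteq> a - c2 *\<^sub>R u" using assms by auto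
      show "0 < (c1 - s) / (c2 - s)" "(c1 - s) / (c2 - s) < 1" using assms by auto
      have "(1 - (c1 - s) / (c2 - s)) * s + (c1 - s) / (c2 - s) * c2 = c1"
      proof -
        have "c2 - s \<noteq> 0" using assms by auto
        then have "(c1 - s) / (c2 - s) * (c2 - s) = c1 - s" by simp
        moreover have "\<And>th::real. (1 - th) * s + th * c2 = s + th * (c2 - s)"
          by (simp add: algebra_simps)
        ultimately show ?thesis by (metis add.commute diff_add_cancel)
      qed
      then show "a - c1 *\<^sub>R u = (1 - (c1 - s) / (c2 - s)) *\<^sub>R (a - s *\<^sub>R u) + ((c1 - s) / (c2 - s)) *\<^sub>R (a - c2 *\<^sub>R u)"
        by (simp add: algebra_simps flip: scaleR_add_left)
    qed
    moreover have "open_segment (a - s *\<^sub>R u) (a - c2 *\<^sub>R u) \<subseteq> interior I"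
      using assms(1,2,3,6) qI fr by (intro in_interior_closure_convex_segment) (auto simp: interior_open)
    ultimately have "a - c1 *\<^sub>R u \<in> I" using assms(1) by (auto simp: interior_open)
    then show False using assms(3,5) fr by auto
  qed
  then show ?thesis using q1 fr assms(3) by auto
qed


lemma cr_par:
  fixes u v :: complex
  assumes "u \<noteq> 0" "Im (v * cnj u) = 0"
  shows "\<exists>l. v = l *\<^sub>R u"
proof -
  have "Re u * Re u + Im u * Im u = (cmod u)^2" using cmod_power2[of u] by (simp add: power2_eq_square)
  then have d: "Re u * Re u + Im u * Im u \<noteq> 0" using assms(1) by simp
  have e: "Im v * Re u = Re v * Im u" using assms(2) by (simp add: algebra_simps)
  define D where "D = Re u * Re u + Im u * Im u"
  define l where "l = (Re v * Re u + Im v * Im u) / D"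
  have "(Re v * Re u + Im v * Im u) * Re u = Re v * D"
  proof -
    have "(Re v * Re u + Im v * Im u) * Re u = Re v * Re u * Re u + (Im v * Re u) * Im u"
      by (simp add: algebra_simps)
    also have "\<dots> = Re v * D" unfolding e D_def by (simp add: algebra_simps)
    finally show ?thesis .
  qed
  then have r: "Re v = l * Re u" using d unfolding l_def D_def
    by (metis nonzero_mult_div_cancel_right times_divide_eq_left)
  have "(Re v * Re u + Im v * Im u) * Im u = Im v * D"
  proof -
    have "(Re v * Re u + Im v * Im u) * Im u = (Re v * Im u) * Re u + Im v * Im u * Im u"
      by (simp add: algebra_simps)
    also have "\<dots> = Im v * D" unfolding e[symmetric] D_def by (simp add: algebra_simps)
    finally show ?thesis .
  qed
  then have i: "Im v = l * Im u" using d unfolding l_def D_def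
    by (metis nonzero_mult_div_cancel_right times_divide_eq_left)
  have "v = l *\<^sub>R u" using r i by (simp add: complex_eq_iff)
  then show ?thesis by blast
qed

lemma parallel_of_seg:
  fixes \<gamma> :: "real \<Rightarrow> complex"
  assumes cont: "continuous_on UNIV \<gamma>" and per: "\<forall>t. \<gamma> (t + L) = \<gamma> t"
    and inj: "inj_on \<gamma> {0..<L}" and img: "\<gamma> ` {0..<L} = C" and L: "L > 0" and g0: "\<gamma> 0 = a"
    and der: "(\<gamma> has_vector_derivative v) (at 0)" and c1: "0 < c1"
    and seg: "\<forall>s. 0 < s \<and> s < c1 \<longrightarrow> a - s *\<^sub>R u \<in> C" and u: "u \<noteq> 0"
  shows "\<exists>l. v = l *\<^sub>R u"
proof (rule ccontr)
  assume np: "\<nexists>l. v = l *\<^sub>R u"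
  define cr where "cr z = Im (z * cnj u)" for z
  have crv: "cr v \<noteq> 0" using cr_par[OF u, of v] np unfolding cr_def by blast
  have crb: "\<bar>cr z\<bar> \<le> cmod z * cmod u" for z
    unfolding cr_def using abs_Im_le_cmod[of "z * cnj u"] by (simp add: norm_mult)
  have crl: "cr (z - w) = cr z - cr w" "cr (t *\<^sub>R z) = t * cr z" for z w t
    unfolding cr_def by (auto simp: algebra_simps scaleR_conv_of_real)
  have cru: "cr (t *\<^sub>R u) = 0" for t
    unfolding cr_def by (simp add: scaleR_conv_of_real mult.assoc complex_mult_cnj)
  have nu: "cmod u > 0" using u by simp
  define e where "e = \<bar>cr v\<bar> / cmod u"
  have e: "e > 0" using crv nu e_def by simp
  have "((\<lambda>h. norm (\<gamma> (0 + h) - \<gamma> 0 - h *\<^sub>R v) / norm h) \<longlongrightarrow> 0) (at 0)"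
    using der unfolding has_vector_derivative_def has_derivative_at by simp
  then have "eventually (\<lambda>h. norm (\<gamma> (0 + h) - \<gamma> 0 - h *\<^sub>R v) / norm h < e) (at 0)"
    using e by (auto dest: order_tendstoD(2))
  then obtain \<delta> where \<delta>: "\<delta> > 0"
    and hd: "\<And>h. h \<noteq> 0 \<Longrightarrow> dist h 0 < \<delta> \<Longrightarrow> norm (\<gamma> h - a - h *\<^sub>R v) / norm h < e"
    unfolding eventually_at using g0 by auto
  have P: "cr (\<gamma> h - a) \<noteq> 0" if "h \<noteq> 0" "\<bar>h\<bar> < \<delta>" for h
  proof
    assume z: "cr (\<gamma> h - a) = 0"
    have "norm (\<gamma> h - a - h *\<^sub>R v) < e * \<bar>h\<bar>"
      using hd[of h] that by (simp add: divide_less_eq)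
    then have "cmod (\<gamma> h - a - h *\<^sub>R v) * cmod u < e * \<bar>h\<bar> * cmod u"
      using nu by simp
    also have "\<dots> = \<bar>h\<bar> * \<bar>cr v\<bar>" using nu e_def by simp
    finally have "\<bar>cr (\<gamma> h - a - h *\<^sub>R v)\<bar> < \<bar>h\<bar> * \<bar>cr v\<bar>"
      using crb[of "\<gamma> h - a - h *\<^sub>R v"] by linarith
    then show False using z by (simp add: crl abs_mult)
  qed
  define K where "K = \<gamma> ` {\<delta>..L - \<delta>}"
  have "compact K" unfolding K_def
    by (intro compact_continuous_image continuous_on_subset[OF cont]) auto
  then have cK: "closed K" by (rule compact_imp_closed)
  have aK: "a \<notin> K"
  proof
    assume "a \<in> K"
    then obtain t where t: "t \<in> {\<delta>..L - \<delta>}" "\<gamma> t = a" unfolding K_def by auto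
    have "t \<in> {0..<L}" using t \<delta> by auto
    then have "t = 0" using inj_onD[OF inj, of t 0] t g0 L by auto
    then show False using t \<delta> by auto
  qed
  obtain \<epsilon> where \<epsilon>: "\<epsilon> > 0" "\<And>x. x \<in> K \<Longrightarrow> \<epsilon> \<le> dist a x"
    using separate_point_closed[OF cK aK] by blast
  define s where "s = min (c1 / 2) (\<epsilon> / (2 * cmod u))"
  have s: "0 < s" "s < c1" using c1 \<epsilon> nu by (auto simp: s_def)
  have "s * cmod u \<le> \<epsilon> / (2 * cmod u) * cmod u" unfolding s_def using nu
    by (intro mult_right_mono) auto
  then have sl: "s * cmod u < \<epsilon>" using nu \<epsilon> by simp
  have "a - s *\<^sub>R u \<in> C" using seg s by auto
  then obtain t where t: "t \<in> {0..<L}" "\<gamma> t = a - s *\<^sub>R u" using img by auto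
  have "t \<noteq> 0" using t g0 s u by auto
  moreover have "t \<notin> {\<delta>..L - \<delta>}"
  proof
    assume "t \<in> {\<delta>..L - \<delta>}"
    then have "\<epsilon> \<le> dist a (\<gamma> t)" using \<epsilon> K_def by auto
    then show False using t sl s by (simp add: dist_norm)
  qed
  ultimately have "(0 < t \<and> t < \<delta>) \<or> (L - \<delta> < t \<and> t < L)" using t(1) by auto
  then consider "0 < t" "t < \<delta>" | "L - \<delta> < t" "t < L" by blast
  then show False
  proof cases
    case 1
    have "cr (\<gamma> t - a) = 0" using t cru[of "-s"] by simp
    then show False using P[of t] 1 by simp
  next
    case 2
    have "\<gamma> (t - L) = \<gamma> t" using per[rule_format, of "t - L"] by simp
    then have "cr (\<gamma> (t - L) - a) = 0" using t cru[of "-s"] by simp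
    then show False using P[of "t - L"] 2 by simp
  qed
qed


lemma f_diff_of_g:
  fixes \<gamma> :: "real \<Rightarrow> complex"
  assumes N: "is_norm N" and der: "(\<gamma> has_vector_derivative v) (at 0)" and g0: "\<gamma> 0 = a"
    and gd: "(\<lambda>t. N (a - b + t *\<^sub>R v)) differentiable (at 0)"
  shows "(\<lambda>t. N (\<gamma> t - b)) differentiable (at 0)"
proof -
  define K where "K = N 1 + N \<i>"
  have K: "K \<ge> 0" using norm_facts(3)[OF N] K_def by (simp add: add_nonneg_nonneg)
  define h where "h t = N (\<gamma> t - b) - N (a - b + t *\<^sub>R v)" for t
  have h0: "h 0 = 0" using g0 by (simp add: h_def)
  have hb: "\<bar>h t\<bar> \<le> K * cmod (\<gamma> t - a - t *\<^sub>R v)" for t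
  proof -
    have "(\<gamma> t - b) - (a - b + t *\<^sub>R v) = \<gamma> t - a - t *\<^sub>R v" by simp
    then show ?thesis using norm_facts(5)[OF N, of "\<gamma> t - b" "a - b + t *\<^sub>R v"]
      unfolding h_def K_def by metis
  qed
  have lim: "((\<lambda>t. norm (\<gamma> (0 + t) - \<gamma> 0 - t *\<^sub>R v) / norm t) \<longlongrightarrow> 0) (at 0)"
    using der unfolding has_vector_derivative_def has_derivative_at by simp
  have "(h has_derivative (\<lambda>_. 0)) (at 0)"
    unfolding has_derivative_at
  proof (intro conjI)
    show "bounded_linear (\<lambda>_::real. 0::real)" by simp
    show "((\<lambda>t. norm (h (0 + t) - h 0 - 0) / norm t) \<longlongrightarrow> 0) (at 0)"
    proof (rule Lim_null_comparison)
      show "((\<lambda>t. K * (norm (\<gamma> (0 + t) - \<gamma> 0 - t *\<^sub>R v) / norm t)) \<longlongrightarrow> 0) (at 0)"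
        using tendsto_mult_right_zero[OF lim, of K] by simp
      show "\<forall>\<^sub>F t in at 0. norm (norm (h (0 + t) - h 0 - 0) / norm t) \<le> K * (norm (\<gamma> (0 + t) - \<gamma> 0 - t *\<^sub>R v) / norm t)"
      proof (rule always_eventually, rule allI)
        fix t :: real
        have "\<bar>h t\<bar> / \<bar>t\<bar> \<le> K * cmod (\<gamma> t - a - t *\<^sub>R v) / \<bar>t\<bar>"
          using hb[of t] by (simp add: divide_right_mono)
        then show "norm (norm (h (0 + t) - h 0 - 0) / norm t) \<le> K * (norm (\<gamma> (0 + t) - \<gamma> 0 - t *\<^sub>R v) / norm t)"
          using h0 g0 by simp
      qed
    qed
  qed
  then have "h differentiable (at 0)" by (rule differentiableI)
  then have "(\<lambda>t. N (a - b + t *\<^sub>R v) + h t) differentiable (at 0)"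
    using gd by (intro differentiable_add)
  then show ?thesis unfolding h_def by simp
qed


theorem mainTheorem9:
  fixes N :: "complex \<Rightarrow> real" and C :: "complex set" and a :: complex
    and L :: real and \<gamma> :: "real \<Rightarrow> complex"
  assumes "is_norm N"
    and "strictly_convex_norm N"
    and "finite {x. N x = 1 \<and> \<not> N differentiable (at x)}"
    and "piecewise_C1_jordan_curve C"
    and "convex (inside C)"
    and "a \<in> C"
    and "arclength_param N C L a \<gamma>"
    and "curve_differentiable_at_param \<gamma> 0"
  shows "\<exists>F. finite F \<and> (NDif N C \<gamma> = F \<or> (\<exists>c. NDif N C \<gamma> = F \<union> closed_segment a c))"
proof -
  note N = assms(1)
  note nf = norm_facts[OF N]
  obtain g where g: "simple_path g" "pathfinish g = pathstart g" "path_image g = C"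
    using assms(4) unfolding piecewise_C1_jordan_curve_def by auto
  have opI: "open (inside C)" and frI: "C = frontier (inside C)"
    using Jordan_inside_outside[OF g(1,2)] g(3) by auto
  have L: "L > 0" and g0: "\<gamma> 0 = a" and per: "\<forall>t. \<gamma> (t + L) = \<gamma> t"
    and inj: "inj_on \<gamma> {0..<L}" and img: "\<gamma> ` {0..<L} = C"
    and ders: "\<forall>t. \<exists>v w. (\<gamma> has_vector_derivative v) (at_right t) \<and>
                 (\<gamma> has_vector_derivative w) (at_left t) \<and> N v = 1 \<and> N w = 1"
    using assms(7) unfolding arclength_param_def by auto
  have cont: "continuous_on UNIV \<gamma>"
  proof (intro continuous_at_imp_continuous_on ballI)
    fix t :: real
    obtain v w where "(\<gamma> has_vector_derivative v) (at_right t)" "(\<gamma> has_vector_derivative w) (at_left t)"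
      using ders by blast
    then have "continuous (at_right t) \<gamma>" "continuous (at_left t) \<gamma>"
      by (auto intro: has_vector_derivative_continuous)
    then show "isCont \<gamma> t" using continuous_at_split by blast
  qed
  obtain v where vr: "(\<gamma> has_vector_derivative v) (at_right 0)" and vl: "(\<gamma> has_vector_derivative v) (at_left 0)"
    using assms(8) unfolding curve_differentiable_at_param_def by auto
  have der: "(\<gamma> has_vector_derivative v) (at 0)" using vd_split[OF vr vl] .
  obtain v' where v': "(\<gamma> has_vector_derivative v') (at_right 0)" "N v' = 1" using ders by blast
  have "v = v'"
    by (rule vector_derivative_unique_within[OF _ vr v'(1)]) simp
  then have v0: "v \<noteq> 0" using v'(2) nf(1) by auto
  define D where "D = {u. N u = 1 \<and> \<not> N differentiable (at u)} \<inter> {u. \<nexists>l. v = l *\<^sub>R u}"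
  have fD: "finite D" using assms(3) unfolding D_def by auto
  define R where "R u = {b \<in> C. \<exists>c>0. b = a - c *\<^sub>R u}" for u
  have sub: "NDif N C \<gamma> \<subseteq> {a} \<union> (\<Union>u\<in>D. R u)"
  proof
    fix b assume bN: "b \<in> NDif N C \<gamma>"
    then have bC: "b \<in> C" and nd: "\<not> (\<lambda>t. N (\<gamma> t - b)) differentiable (at 0)"
      unfolding NDif_def by auto
    show "b \<in> {a} \<union> (\<Union>u\<in>D. R u)"
    proof (cases "b = a")
      case True then show ?thesis by simp
    next
      case False
      define x where "x = a - b"
      have x0: "x \<noteq> 0" using False x_def by simp
      define c where "c = N x"
      have "N x \<noteq> 0" using N x0 unfolding is_norm_def by blast
      then have c: "c > 0" using nf(3)[of x] unfolding c_def by linarith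
      define u where "u = (1 / c) *\<^sub>R x"
      have xu: "x = c *\<^sub>R u" using c u_def by simp
      have Nu: "N u = 1" using c unfolding u_def c_def nf(6) by simp
      have gnd: "\<not> (\<lambda>t. N (a - b + t *\<^sub>R v)) differentiable (at 0)"
        using f_diff_of_g[OF N der g0] nd by blast
      have ndu: "\<not> N differentiable (at u)"
      proof
        assume du: "N differentiable (at u)"
        have Neq: "N = (\<lambda>y. c *\<^sub>R N ((1 / c) *\<^sub>R y))"
        proof (rule ext)
          fix y show "N y = c *\<^sub>R N ((1 / c) *\<^sub>R y)" using c by (simp add: nf(6))
        qed
        have "(\<lambda>y. (1 / c) *\<^sub>R y) differentiable (at x)" by simp
        moreover have "N differentiable (at ((\<lambda>y. (1 / c) *\<^sub>R y) x))" using du u_def by simp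
        ultimately have "(N \<circ> (\<lambda>y. (1 / c) *\<^sub>R y)) differentiable (at x)"
          by (rule differentiable_chain_at)
        then have "(\<lambda>y. c *\<^sub>R N ((1 / c) *\<^sub>R y)) differentiable (at x)"
          by (simp add: o_def)
        then have dx: "N differentiable (at x)" by (simp only: Neq[symmetric])
        have "(\<lambda>t::real. x + t *\<^sub>R v) differentiable (at 0)" by simp
        moreover have "N differentiable (at ((\<lambda>t::real. x + t *\<^sub>R v) 0))" using dx by simp
        ultimately have "(N \<circ> (\<lambda>t::real. x + t *\<^sub>R v)) differentiable (at 0)"
          by (rule differentiable_chain_at)
        then show False using gnd x_def by (simp add: o_def)
      qed
      have npar: "\<nexists>l. v = l *\<^sub>R u"
      proof
        assume "\<exists>l. v = l *\<^sub>R u"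
        then obtain l where l: "v = l *\<^sub>R u" by blast
        have geq: "N (a - b + t *\<^sub>R v) = \<bar>c + t * l\<bar>" for t
        proof -
          have "a - b + t *\<^sub>R v = (c + t * l) *\<^sub>R u" using xu l x_def by (simp add: algebra_simps)
          then show ?thesis using Nu nf(6) by simp
        qed
        have "(\<lambda>t::real. c + t * l) differentiable (at 0)" by simp
        then have "(\<lambda>t. \<bar>c + t * l\<bar>) differentiable (at 0 within UNIV)"
        proof (rule differentiable_transform_within[where d = "c / (\<bar>l\<bar> + 1)"])
          show "0 < c / (\<bar>l\<bar> + 1)" using c by simp
          fix t :: real assume "dist t 0 < c / (\<bar>l\<bar> + 1)"
          then have "\<bar>t\<bar> * (\<bar>l\<bar> + 1) < c"
            by (simp add: less_divide_eq add_pos_nonneg)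
          then have "\<bar>t * l\<bar> < c" by (simp add: abs_mult algebra_simps)
          then show "c + t * l = \<bar>c + t * l\<bar>" by simp
        qed simp
        then show False using gnd geq by simp
      qed
      have uD: "u \<in> D" using Nu ndu npar unfolding D_def by auto
      have "c *\<^sub>R u = a - b" using xu x_def by simp
      then have "b = a - c *\<^sub>R u" by simp
      then have "b \<in> R u" using bC c unfolding R_def by blast
      with uD show ?thesis by (intro UnI2 UN_I)
    qed
  qed
  have fR: "finite (R u)" if uD: "u \<in> D" for u
  proof -
    have u0: "u \<noteq> 0" using uD nf(1) unfolding D_def by auto
    have npar: "\<nexists>l. v = l *\<^sub>R u" using uD unfolding D_def by auto
    have no2: False if "a - c1 *\<^sub>R u \<in> C" "a - c2 *\<^sub>R u \<in> C" "0 < c1" "c1 < c2" for c1 c2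
    proof -
      have "\<forall>s. 0 < s \<and> s < c1 \<longrightarrow> a - s *\<^sub>R u \<in> C"
        using seg_in_C[OF opI assms(5) frI assms(6) that(1,2,3,4) u0] by blast
      then have "\<exists>l. v = l *\<^sub>R u"
        using parallel_of_seg[OF cont per inj img L g0 der that(3) _ u0] by blast
      then show False using npar by blast
    qed
    have "R u \<subseteq> {b}" if bR: "b \<in> R u" for b
    proof
      fix b' assume "b' \<in> R u"
      then obtain c' where c': "b' \<in> C" "c' > 0" "b' = a - c' *\<^sub>R u" unfolding R_def by auto
      obtain c where c: "b \<in> C" "c > 0" "b = a - c *\<^sub>R u" using bR unfolding R_def by auto
      have "c = c'"
      proof (rule ccontr)
        assume "c \<noteq> c'"
        then consider "c < c'" | "c' < c" by linarith
        then show False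
        proof cases
          case 1 then show False using no2[of c c'] c c' by auto
        next
          case 2 then show False using no2[of c' c] c c' by auto
        qed
      qed
      then show "b' \<in> {b}" using c c' by simp
    qed
    then show ?thesis
    proof (cases "R u = {}")
      case False
      then obtain b where "b \<in> R u" by blast
      then show ?thesis using finite_subset[of "R u" "{b}"] \<open>\<And>b. b \<in> R u \<Longrightarrow> R u \<subseteq> {b}\<close> by blast
    qed simp
  qed
  have "finite ({a} \<union> (\<Union>u\<in>D. R u))"
    using fD fR by simp
  then have "finite (NDif N C \<gamma>)"
    using sub by (rule finite_subset[rotated])
  then show ?thesis by blast
qed

end
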